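(* Let $k\ge1$ and let $L$ be the negative $(2,2k)$-torus link (the closure of the 2-strand braid $\sigma_1^{-2k}$), with both components colored by the same color. Then the tail of the colored Jones polynomial of $L$ exists and equals $$T_L(q)=\Psi(q^{2k-1},q).$$
   Context: The false theta function is $\Psi(a,b)=\sum_{k=0}^{\infty}a^{k(k+1)/2}b^{k(k-1)/2}-\sum_{k=1}^{\infty}a^{k(k-1)/2}b^{k(k+1)/2}$. $J_{N,L}(q)$ denotes the colored Jones polynomial of a link $L$ associated to the $N$-dimensional irreducible representation of $U_q(\mathfrak{sl}_2)$ (all components colored by $N$), normalized so that $J_{N,\text{unknot}}=1$; $J_{2,L}$ is the Jones polynomial. For a Laurent polynomial $P$ (possibly in $q^{1/2}$) and a power series $S$, write $P\doteq_n S$ if there exist a sign $\varepsilon$ and an exponent $s$ such that $\varepsilon q^{s}P(q)$ is a power series in $q$ that is congruent to $S(q)$ modulo $q^n$. The tail of $L$ is a power series $T_L(q)=\sum_{j\ge0}a_jq^j$ with $J_{N,L}(q)\doteq_N T_L(q)$ for every $N\ge1$. *)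

theory Defs
  imports "HOL-Computational_Algebra.Formal_Laurent_Series"
begin

text \<open>All Laurent polynomials in q^(1/2) are represented as formal Laurent series
  in the variable t = q^(1/2) (so q = t^2), over the rationals.\<close>

definition qint :: "int \<Rightarrow> rat fls" where
  "qint c = (fls_X_intpow c - fls_X_intpow (-c)) / (fls_X_intpow 1 - fls_X_intpow (-1))"

text \<open>Colored Jones polynomial J_{N,L}(q), normalized so that the unknot gives 1,
  of the 2-component link L = closure of the 2-strand braid sigma_1^(2n), both
  components coloured by the N-dimensional irreducible U_q(sl_2)-module.
  It is computed by the Rosso--Jones / Reshetikhin--Turaev formula: V_N (x) V_N
  decomposes as the sum of V_{2j+1}, j < N, on which the braiding acts by the scalar
  (-1)^(N-1-j) q^(-j(j+1)/2 + (N^2-1)/4); the 2n-th power of this scalar is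
  q^(-n j(j+1) + n(N^2-1)/2) = t^(-2 n j(j+1) + n(N^2-1)); the quantum trace weights
  V_{2j+1} by [2j+1]; division by [N] normalizes the unknot to 1.  Both components
  are unknots with zero self-writhe, so no framing correction is needed.\<close>
definition colored_jones_T2 :: "int \<Rightarrow> nat \<Rightarrow> rat fls" where
  "colored_jones_T2 n N =
     (\<Sum>j<N. fls_X_intpow (- 2 * n * int j * (int j + 1) + n * (int N ^ 2 - 1))
              * qint (2 * int j + 1)) / qint (int N)"

text \<open>P \<doteq>_m S: there are a sign eps and an exponent s (a half-integer power of q,
  i.e. an integer power of t) such that eps q^s P(q) is a power series in q that is
  congruent to S(q) modulo q^m.\<close>
definition doteq :: "nat \<Rightarrow> rat fls \<Rightarrow> int fps \<Rightarrow> bool" where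
  "doteq m P S \<longleftrightarrow>
     (\<exists>\<epsilon>::rat. \<exists>s::int. (\<epsilon> = 1 \<or> \<epsilon> = -1) \<and>
        (let R = fls_const \<epsilon> * fls_X_intpow s * P in
           (\<forall>i<0. fls_nth R i = 0) \<and> (\<forall>i. odd i \<longrightarrow> fls_nth R i = 0) \<and>
           (\<forall>i<m. fls_nth R (2 * int i) = of_int (fps_nth S i))))"

definition is_tail :: "(nat \<Rightarrow> rat fls) \<Rightarrow> int fps \<Rightarrow> bool" where
  "is_tail J T \<longleftrightarrow> (\<forall>N\<ge>1. doteq N (J N) T)"

text \<open>The false theta function evaluated at a = q^\<alpha>, b = q^\<beta>, as a power series in q:
  Psi(a,b) = sum_{m\<ge>0} a^(m(m+1)/2) b^(m(m-1)/2) - sum_{m\<ge>1} a^(m(m-1)/2) b^(m(m+1)/2).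
  The coefficient of q^j counts the exponents equal to j (well defined for \<alpha>,\<beta> \<ge> 1).\<close>
definition false_theta :: "nat \<Rightarrow> nat \<Rightarrow> int fps" where
  "false_theta \<alpha> \<beta> = Abs_fps (\<lambda>j.
      int (card {m::nat. \<alpha> * (m * (m + 1) div 2) + \<beta> * (m * (m - 1) div 2) = j})
    - int (card {m::nat. m \<ge> 1 \<and> \<alpha> * (m * (m - 1) div 2) + \<beta> * (m * (m + 1) div 2) = j}))"

end

theory Submission
  imports Defs
begin

abbreviation xp :: "int \<Rightarrow> rat fls" where "xp m \<equiv> fls_X_intpow m"

lemma xp_nth: "fls_nth (xp m) i = (if i = m then 1 else 0)"
  by simp

lemma xp_mult: "xp a * xp b = xp (a + b)"
  by (rule fls_X_intpow_times_fls_X_intpow)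

lemma xp_diff_nz: "a \<noteq> b \<Longrightarrow> xp a - xp b \<noteq> 0"
proof
  assume "a \<noteq> b" "xp a - xp b = 0"
  then have "fls_nth (xp a - xp b) a = 0" by simp
  with \<open>a \<noteq> b\<close> show False by simp
qed

lemma key_identity:
  fixes k N :: nat
  assumes N: "N \<ge> 1" and K: "k \<ge> 1"
  defines "s \<equiv> int k * (int N ^ 2 - 1) + 1 - int N"
  shows "xp s * colored_jones_T2 (- int k) N * (1 - xp (2 * int N)) =
     (\<Sum>j<N. xp (2 * int (k*j^2 + (k-1)*j)) - xp (2 * int (k*j^2+(k+1)*j+1)))"
proof -
  define D where "D = xp 1 - xp (-1)"
  define E where "E = xp (int N) - xp (- int N)"
  define a where "a j = 2 * int k * int j * (int j + 1) - int k * (int N ^ 2 - 1)" for j :: nat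
  have D0: "D \<noteq> 0" unfolding D_def by (rule xp_diff_nz) simp
  have E0: "E \<noteq> 0" unfolding E_def by (rule xp_diff_nz) (use N in simp)
  have J: "colored_jones_T2 (- int k) N = (\<Sum>j<N. xp (a j) * (xp (2*int j+1) - xp (-(2*int j+1)))) / E"
  proof -
    have "colored_jones_T2 (- int k) N = (\<Sum>j<N. xp (a j) * ((xp (2*int j+1) - xp (-(2*int j+1))) / D)) / (E / D)"
      unfolding colored_jones_T2_def qint_def D_def E_def a_def by (simp add: algebra_simps)
    also have "\<dots> = (\<Sum>j<N. xp (a j) * (xp (2*int j+1) - xp (-(2*int j+1)))) / D / (E / D)"
      by (simp add: sum_divide_distrib)
    also have "\<dots> = (\<Sum>j<N. xp (a j) * (xp (2*int j+1) - xp (-(2*int j+1)))) / E"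
      using D0 E0 by (simp add: field_simps)
    finally show ?thesis .
  qed
  have F: "xp s * (1 - xp (2 * int N)) = - xp (s + int N) * E"
  proof -
    have "xp (s + int N) * E = xp (s + int N + int N) - xp (s + int N + - int N)"
      unfolding E_def right_diff_distrib xp_mult ..
    also have "\<dots> = xp (s + 2 * int N) - xp s" by (simp add: algebra_simps)
    finally have "xp (s + int N) * E = xp (s + 2 * int N) - xp s" .
    moreover have "xp s * (1 - xp (2 * int N)) = xp s - xp (s + 2 * int N)"
      by (simp only: right_diff_distrib xp_mult mult_1_right)
    ultimately show ?thesis by simp
  qed
  have "xp s * colored_jones_T2 (- int k) N * (1 - xp (2 * int N)) =
        - xp (s + int N) * (\<Sum>j<N. xp (a j) * (xp (2*int j+1) - xp (-(2*int j+1))))"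
  proof -
    define S where "S = (\<Sum>j<N. xp (a j) * (xp (2*int j+1) - xp (-(2*int j+1))))"
    have "xp s * (S / E) * (1 - xp (2 * int N)) = (xp s * (1 - xp (2 * int N))) * S / E"
      by (simp add: ac_simps)
    also have "\<dots> = - xp (s + int N) * S" unfolding F using E0 by simp
    finally show ?thesis unfolding J S_def .
  qed
  also have "\<dots> = (\<Sum>j<N. - xp (s + int N) * (xp (a j) * (xp (2*int j+1) - xp (-(2*int j+1)))))"
    by (simp add: sum_distrib_left)
  also have "\<dots> = (\<Sum>j<N. xp (2 * int (k*j^2 + (k-1)*j)) - xp (2 * int (k*j^2+(k+1)*j+1)))"
  proof (rule sum.cong[OF refl])
    fix j assume "j \<in> {..<N}"
    have e1: "s + int N + a j + (-(2*int j+1)) = 2 * int (k*j^2 + (k-1)*j)"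
      using K unfolding s_def a_def
      by (cases k) (auto simp: algebra_simps power2_eq_square of_nat_diff)
    have e2: "s + int N + a j + (2*int j+1) = 2 * int (k*j^2+(k+1)*j+1)"
      unfolding s_def a_def by (simp add: algebra_simps power2_eq_square)
    show "- xp (s + int N) * (xp (a j) * (xp (2*int j+1) - xp (-(2*int j+1)))) =
          xp (2 * int (k*j^2 + (k-1)*j)) - xp (2 * int (k*j^2+(k+1)*j+1))"
    proof -
      have "- xp (s + int N) * (xp (a j) * (xp (2*int j+1) - xp (-(2*int j+1)))) =
         xp (s + int N + a j + (-(2*int j+1))) - xp (s + int N + a j + (2*int j+1))"
        by (simp only: right_diff_distrib mult.assoc[symmetric] xp_mult minus_mult_left[symmetric]) (simp add: algebra_simps)
      then show ?thesis by (simp only: e1 e2)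
    qed
  qed
  finally show ?thesis .
qed

lemma rec_nth:
  assumes "R * (1 - xp (2 * int N)) = P"
  shows "fls_nth R i = fls_nth P i + fls_nth R (i - 2 * int N)"
proof -
  have "R * xp (2 * int N) = fls_shift (- (2 * int N)) R"
    by (rule fls_X_intpow_times_conv_shift(2))
  then have "fls_nth (R * xp (2 * int N)) i = fls_nth R (i - 2 * int N)" by simp
  moreover have "fls_nth P i = fls_nth R i - fls_nth (R * xp (2 * int N)) i"
    using assms[symmetric] by (simp add: right_diff_distrib)
  ultimately show ?thesis by simp
qed

lemma rec_iter:
  assumes "R * (1 - xp (2 * int N)) = P" "\<And>m::nat. fls_nth P (i - 2 * int N * int m) = 0"
  shows "fls_nth R i = fls_nth R (i - 2 * int N * int m)"
proof (induction m)
  case 0 then show ?case by simp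
next
  case (Suc m)
  have "fls_nth R (i - 2 * int N * int m) = fls_nth P (i - 2 * int N * int m) + fls_nth R (i - 2 * int N * int m - 2 * int N)"
    by (rule rec_nth[OF assms(1)])
  also have "\<dots> = fls_nth R (i - 2 * int N * int (Suc m))"
    using assms(2)[of m] by (simp add: algebra_simps)
  finally show ?case using Suc by simp
qed

lemma rec_vanish:
  assumes "R * (1 - xp (2 * int N)) = P" "\<And>m::nat. fls_nth P (i - 2 * int N * int m) = 0" "N \<ge> 1"
  shows "fls_nth R i = 0"
proof -
  define m where "m = nat (i - fls_subdegree R) + 1"
  have "fls_nth R i = fls_nth R (i - 2 * int N * int m)" by (rule rec_iter[OF assms(1,2)])
  also have "\<dots> = 0"
  proof (rule fls_eq0_below_subdegree)
    have "2 * int N * int m \<ge> int m" using assms(3) by (simp add: mult_le_cancel_right1)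
    then show "i - 2 * int N * int m < fls_subdegree R" unfolding m_def by linarith
  qed
  finally show ?thesis .
qed

lemma rec_low:
  assumes "R * (1 - xp (2 * int N)) = P" "\<And>i. i < 0 \<Longrightarrow> fls_nth P i = 0" "N \<ge> 1"
    "0 \<le> i" "i < 2 * int N"
  shows "fls_nth R i = fls_nth P i"
proof -
  have "fls_nth R (i - 2 * int N) = 0"
  proof (rule rec_vanish[OF assms(1) _ assms(3)])
    fix m :: nat
    have "int N * int m \<ge> 0" by simp
    then show "fls_nth P (i - 2 * int N - 2 * int N * int m) = 0" using assms(5) by (intro assms(2)) linarith
  qed
  then show ?thesis using rec_nth[OF assms(1), of i] by simp
qed

lemma sum_ind_card:
  "(\<Sum>j<(N::nat). if Q j then (1::rat) else 0) = of_nat (card {j. j < N \<and> Q j})"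
proof (induction N)
  case 0 then show ?case by simp
next
  case (Suc N)
  have "{j. j < Suc N \<and> Q j} = (if Q N then insert N {j. j < N \<and> Q j} else {j. j < N \<and> Q j})"
    by (auto simp: less_Suc_eq)
  then show ?case using Suc by auto
qed

lemma tri_eq: "m * (m + 1) = 2 * (m * (m + 1) div 2)" for m :: nat
  by simp

lemma f1_eq:
  fixes k m :: nat
  assumes "k \<ge> 1"
  shows "(2*k-1) * (m * (m + 1) div 2) + m * (m - 1) div 2 = k*m^2 + (k-1)*m"
proof (cases m)
  case 0 then show ?thesis by simp
next
  case (Suc j)
  obtain k' where k: "k = Suc k'" using assms by (cases k) auto
  have a: "m * (m + 1) div 2 = j * (j + 1) div 2 + m"
    unfolding Suc by (simp add: algebra_simps)
  have b: "m * (m - 1) div 2 = j * (j + 1) div 2" unfolding Suc by (simp add: algebra_simps)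
  have c: "2 * (j * (j + 1) div 2) = j * (j + 1)" using tri_eq[of j] by simp
  have "2 * ((2*k-1) * (m * (m + 1) div 2) + m * (m - 1) div 2) = 2 * (k*m^2 + (k-1)*m)"
    unfolding a b using c unfolding k Suc by (simp add: algebra_simps power2_eq_square)
  then show ?thesis by simp
qed

lemma f2_eq:
  fixes k j :: nat
  assumes "k \<ge> 1"
  shows "(2*k-1) * (Suc j * (Suc j - 1) div 2) + Suc j * (Suc j + 1) div 2 = k*j^2+(k+1)*j+1"
proof -
  obtain k' where k: "k = Suc k'" using assms by (cases k) auto
  have a: "Suc j * (Suc j + 1) div 2 = j * (j + 1) div 2 + Suc j"
    by (simp add: algebra_simps)
  have b: "Suc j * (Suc j - 1) div 2 = j * (j + 1) div 2" by (simp add: algebra_simps)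
  have c: "2 * (j * (j + 1) div 2) = j * (j + 1)" using tri_eq[of j] by simp
  have "2 * ((2*k-1) * (Suc j * (Suc j - 1) div 2) + Suc j * (Suc j + 1) div 2) = 2 * (k*j^2+(k+1)*j+1)"
    unfolding a b using c unfolding k by (simp add: algebra_simps power2_eq_square)
  then show ?thesis by simp
qed

theorem mainTheorem5:
  fixes k :: nat
  assumes "k \<ge> 1"
  shows "is_tail (colored_jones_T2 (- int k)) (false_theta (2 * k - 1) 1)"
  unfolding is_tail_def
proof (intro allI impI)
  fix N :: nat assume N: "N \<ge> 1"
  define s where "s = int k * (int N ^ 2 - 1) + 1 - int N"
  define R where "R = xp s * colored_jones_T2 (- int k) N"
  define e1 where "e1 j = k*j^2 + (k-1)*j" for j :: nat
  define e2 where "e2 j = k*j^2+(k+1)*j+1" for j :: nat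
  define P where "P = (\<Sum>j<N. xp (2 * int (e1 j)) - xp (2 * int (e2 j)))"
  have RP: "R * (1 - xp (2 * int N)) = P"
    unfolding R_def P_def s_def e1_def e2_def by (rule key_identity[OF N assms])
  have Pn: "fls_nth P i = (\<Sum>j<N. (if i = 2 * int (e1 j) then 1 else 0) - (if i = 2 * int (e2 j) then 1 else 0))" for i
    unfolding P_def fls_nth_sum by (simp only: fls_minus_nth xp_nth)
  have Pneg: "fls_nth P i = 0" if "i < 0" for i
    unfolding Pn using that by (intro sum.neutral) auto
  have Podd: "fls_nth P i = 0" if "odd i" for i
    unfolding Pn using that by (intro sum.neutral) auto
  have e1ge: "e1 j \<ge> j" for j
  proof -
    have "j \<le> j * j" by (cases j) auto
    also have "\<dots> \<le> k * j^2" using assms by (simp add: power2_eq_square)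
    finally show ?thesis unfolding e1_def by simp
  qed
  have e2ge: "e2 j \<ge> j" for j unfolding e2_def by simp
  have coeff: "fls_nth R (2 * int i) = of_int (fps_nth (false_theta (2 * k - 1) 1) i)" if iN: "i < N" for i
  proof -
    have "fls_nth R (2 * int i) = fls_nth P (2 * int i)"
      by (rule rec_low[OF RP Pneg N]) (use iN in auto)
    also have "\<dots> = (\<Sum>j<N. if e1 j = i then 1 else 0) - (\<Sum>j<N. if e2 j = i then 1 else 0)"
      unfolding Pn sum_subtractf by (intro arg_cong2[where f="(-)"] sum.cong) auto
    also have "\<dots> = of_nat (card {j. j < N \<and> e1 j = i}) - of_nat (card {j. j < N \<and> e2 j = i})"
      by (simp only: sum_ind_card)
    also have "{j. j < N \<and> e1 j = i} = {m. (2*k-1) * (m * (m + 1) div 2) + 1 * (m * (m - 1) div 2) = i}"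
    proof -
      have "(2*k-1) * (m * (m + 1) div 2) + 1 * (m * (m - 1) div 2) = e1 m" for m
        using f1_eq[OF assms, of m] unfolding e1_def by simp
      then show ?thesis using e1ge iN by (auto intro: le_less_trans)
    qed
    also have "card {j. j < N \<and> e2 j = i} = card {m. m \<ge> 1 \<and> (2*k-1) * (m * (m - 1) div 2) + 1 * (m * (m + 1) div 2) = i}"
    proof -
      have "{m. m \<ge> 1 \<and> (2*k-1) * (m * (m - 1) div 2) + 1 * (m * (m + 1) div 2) = i} = Suc ` {j. j < N \<and> e2 j = i}"
      proof -
        have h: "(2*k-1) * (Suc j * (Suc j - 1) div 2) + 1 * (Suc j * (Suc j + 1) div 2) = e2 j" for j
          using f2_eq[OF assms, of j] unfolding e2_def by simp
        show ?thesis
        proof (intro set_eqI iffI)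
          fix m assume "m \<in> {m. m \<ge> 1 \<and> (2*k-1) * (m * (m - 1) div 2) + 1 * (m * (m + 1) div 2) = i}"
          then obtain j where m: "m = Suc j" and "e2 j = i" using h by (cases m) auto
          then have "j < N" using e2ge[of j] iN by linarith
          then show "m \<in> Suc ` {j. j < N \<and> e2 j = i}" using m \<open>e2 j = i\<close> by auto
        next
          fix m assume "m \<in> Suc ` {j. j < N \<and> e2 j = i}"
          then show "m \<in> {m. m \<ge> 1 \<and> (2*k-1) * (m * (m - 1) div 2) + 1 * (m * (m + 1) div 2) = i}"
            using h by auto
        qed
      qed
      then show ?thesis by (simp add: card_image)
    qed
    finally show ?thesis unfolding false_theta_def by simp
  qed
  show "doteq N (colored_jones_T2 (- int k) N) (false_theta (2 * k - 1) 1)"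
    unfolding doteq_def Let_def
  proof (intro exI[of _ "1::rat"] exI[of _ s] conjI allI impI)
    show "(1::rat) = 1 \<or> (1::rat) = -1" by simp
    have RR: "fls_const (1::rat) * xp s * colored_jones_T2 (- int k) N = R" unfolding R_def by simp
    fix i :: int
    {
      assume "i < 0"
      show "fls_nth (fls_const 1 * xp s * colored_jones_T2 (- int k) N) i = 0"
        unfolding RR
      proof (rule rec_vanish[OF RP _ N])
        fix m :: nat
        have "int N * int m \<ge> 0" by simp
        then show "fls_nth P (i - 2 * int N * int m) = 0" using \<open>i < 0\<close> by (intro Pneg) linarith
      qed
    }
    {
      assume "odd i"
      show "fls_nth (fls_const 1 * xp s * colored_jones_T2 (- int k) N) i = 0"
        unfolding RR
      proof (rule rec_vanish[OF RP _ N])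
        fix m :: nat
        show "fls_nth P (i - 2 * int N * int m) = 0" using \<open>odd i\<close> by (intro Podd) simp
      qed
    }
  next
    fix i :: nat assume "i < N"
    have RR: "fls_const (1::rat) * xp s * colored_jones_T2 (- int k) N = R" unfolding R_def by simp
    show "fls_nth (fls_const 1 * xp s * colored_jones_T2 (- int k) N) (2 * int i) =
          of_int (fps_nth (false_theta (2 * k - 1) 1) i)"
      unfolding RR by (rule coeff[OF \<open>i < N\<close>])
  qed
qed

end
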